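(* Let $\lambda_1,\lambda_2\in P^+$ and $\lambda=\lambda_1+\lambda_2$. Then $F_{\lambda_1,\lambda_2}$ is isomorphic to the $\mathfrak{sl}_n\otimes\mathbb C[t]$-module generated by a vector $w$ subject to the relations $(\mathfrak n^+\otimes\mathbb C[t]).w=0$, $(\mathfrak h\otimes t\mathbb C[t]).w=0$, $(\mathfrak n^-\otimes t^2\mathbb C[t]).w=0$, and for all $\alpha\in R^+$ and $h\in\mathfrak h$: $(f_\alpha\otimes 1)^{\lambda(h_\alpha)+1}.w=0$, $(f_\alpha\otimes t)^{\min\{\lambda_1(h_\alpha),\lambda_2(h_\alpha)\}+1}.w=0$, $(h\otimes 1-\lambda(h)).w=0$.
   Context: Let $\mathfrak{sl}_n=\mathfrak n^+\oplus\mathfrak h\oplus\mathfrak n^-$, $\mathfrak b=\mathfrak n^+\oplus\mathfrak h$, $R^+$ the positive roots, $P^+$ the dominant integral weights; for $\alpha\in R^+$ fix an $\mathfrak{sl}_2$-triple $e_\alpha,f_\alpha,h_\alpha$ with $f_\alpha\in\mathfrak g_{-\alpha}$. The current algebra $\mathfrak{sl}_n\otimes\mathbb C[t]$ has bracket $[x\otimes p,y\otimes q]=[x,y]\otimes pq$. For $\lambda_1,\lambda_2\in P^+$, let $\mathbb C_{\lambda_1+\lambda_2}$ be the one-dimensional $\mathfrak b\otimes\mathbb C[t]$-module obtained from the composite $\mathfrak b\otimes\mathbb C[t]\to\mathfrak b\to\mathfrak h$ (evaluation at $t=0$, then killing $\mathfrak n^+$) with $\mathfrak h$ acting by $\lambda_1+\lambda_2$.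 Let $\mathfrak a=(\mathfrak b\otimes 1)\oplus(\mathfrak{sl}_n\otimes t\mathbb C[t])$, and let $M_{\lambda_1,\lambda_2}$ be the quotient of the induced module $U(\mathfrak a)\otimes_{U(\mathfrak b\otimes\mathbb C[t])}\mathbb C_{\lambda_1+\lambda_2}$ by the submodule generated by $(\mathfrak n^-\otimes t^2\mathbb C[t])$ applied to the generator and by $(f_\alpha\otimes t)^{\min\{\lambda_1(h_\alpha),\lambda_2(h_\alpha)\}+1}$ applied to the generator, for all $\alpha\in R^+$. Then $F_{\lambda_1,\lambda_2}$ is defined as the maximal quotient of $U(\mathfrak{sl}_n\otimes\mathbb C[t])\otimes_{U(\mathfrak a)}M_{\lambda_1,\lambda_2}$ which is integrable as an $\mathfrak{sl}_n$-module (i.e. on which all $e_\alpha,f_\alpha$ act locally nilpotently). *)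

theory Defs
  imports "HOL-Analysis.Analysis"
begin

text \<open>Conventions. sl_n is realised as the traceless matrices in complex^'n^'n,
 where the finite index type 'n carries a linear order (fixing the Borel:
 n+ = strictly upper triangular, h = traceless diagonal, n- = strictly lower
 triangular). An element of the current algebra sl_n tensor C[t] is a function
 x :: nat => complex^'n^'n with finite support, x k being the coefficient of t^k.\<close>

type_synonym ('n) cur = "nat \<Rightarrow> complex^'n^'n"

definition smat :: "complex \<Rightarrow> complex^'n::finite^'n \<Rightarrow> complex^'n^'n" where
  "smat c A = (\<chi> i j. c * A$i$j)"

definition Emat :: "'n::finite \<Rightarrow> 'n \<Rightarrow> complex^'n^'n" where
  "Emat i j = (\<chi> a b. if a = i \<and> b = j then 1 else 0)"

definition curalg :: "'n::finite cur set" where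
  "curalg = {x. finite {k. x k \<noteq> 0} \<and> (\<forall>k. trace (x k) = 0)}"

definition cbr :: "'n::finite cur \<Rightarrow> 'n cur \<Rightarrow> 'n cur" where
  "cbr x y = (\<lambda>k. \<Sum>p\<le>k. x p ** y (k - p) - y (k - p) ** x p)"

definition cscale :: "complex \<Rightarrow> 'n::finite cur \<Rightarrow> 'n cur" where
  "cscale c x = (\<lambda>k. smat c (x k))"

definition cadd :: "'n::finite cur \<Rightarrow> 'n cur \<Rightarrow> 'n cur" where
  "cadd x y = (\<lambda>k. x k + y k)"

definition mono :: "complex^'n::finite^'n \<Rightarrow> nat \<Rightarrow> 'n cur" where
  "mono X k = (\<lambda>m. if m = k then X else 0)"

definition cartan :: "(complex^'n::finite^'n) set" where
  "cartan = {H. trace H = 0 \<and> (\<forall>i j. i \<noteq> j \<longrightarrow> H$i$j = 0)}"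

definition nplus_cur :: "'n::{finite,linorder} cur set" where
  "nplus_cur = {x \<in> curalg. \<forall>k a b. b \<le> a \<longrightarrow> x k $ a $ b = 0}"

definition nplus_1 :: "'n::{finite,linorder} cur set" where
  "nplus_1 = {x \<in> nplus_cur. \<forall>k>0. x k = 0}"

definition h_tpos :: "'n::finite cur set" where
  "h_tpos = {x \<in> curalg. x 0 = 0 \<and> (\<forall>k a b. a \<noteq> b \<longrightarrow> x k $ a $ b = 0)}"

definition b_tpos :: "'n::{finite,linorder} cur set" where
  "b_tpos = {x \<in> curalg. x 0 = 0 \<and> (\<forall>k a b. b < a \<longrightarrow> x k $ a $ b = 0)}"

definition nminus_t2 :: "'n::{finite,linorder} cur set" where
  "nminus_t2 = {x \<in> curalg. x 0 = 0 \<and> x 1 = 0 \<and> (\<forall>k a b. a \<le> b \<longrightarrow> x k $ a $ b = 0)}"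

text \<open>Weights: an integral weight is given by lam :: 'n => int, acting on
 diagonal H by sum_i lam i * H_ii (well defined on traceless H up to constants).
 For the positive root alpha = eps_i - eps_j (i < j): e_alpha = E_ij,
 f_alpha = E_ji, h_alpha = E_ii - E_jj, so lam(h_alpha) = lam i - lam j.\<close>
definition wt :: "('n::finite \<Rightarrow> int) \<Rightarrow> complex^'n^'n \<Rightarrow> complex" where
  "wt lam H = (\<Sum>i\<in>UNIV. of_int (lam i) * H$i$i)"

definition dominant :: "('n::linorder \<Rightarrow> int) \<Rightarrow> bool" where
  "dominant lam \<longleftrightarrow> (\<forall>i j. i \<le> j \<longrightarrow> lam j \<le> lam i)"

definition hval :: "('n \<Rightarrow> int) \<Rightarrow> 'n \<Rightarrow> 'n \<Rightarrow> nat" where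
  "hval lam i j = nat (lam i - lam j)"

definition is_rep :: "(complex \<Rightarrow> 'v::ab_group_add \<Rightarrow> 'v) \<Rightarrow> ('n::finite cur \<Rightarrow> 'v \<Rightarrow> 'v) \<Rightarrow> bool" where
  "is_rep sc \<rho> \<longleftrightarrow> vector_space sc \<and>
     (\<forall>x\<in>curalg. \<forall>u v. \<rho> x (u + v) = \<rho> x u + \<rho> x v) \<and>
     (\<forall>x\<in>curalg. \<forall>c u. \<rho> x (sc c u) = sc c (\<rho> x u)) \<and>
     (\<forall>x\<in>curalg. \<forall>y\<in>curalg. \<forall>u. \<rho> (cadd x y) u = \<rho> x u + \<rho> y u) \<and>
     (\<forall>x\<in>curalg. \<forall>c u. \<rho> (cscale c x) u = sc c (\<rho> x u)) \<and>
     (\<forall>x\<in>curalg. \<forall>y\<in>curalg. \<forall>u. \<rho> (cbr x y) u = \<rho> x (\<rho> y u) - \<rho> y (\<rho> x u))"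

inductive_set gsub :: "(complex \<Rightarrow> 'v::ab_group_add \<Rightarrow> 'v) \<Rightarrow> ('n::finite cur \<Rightarrow> 'v \<Rightarrow> 'v) \<Rightarrow> 'v \<Rightarrow> 'v set"
  for sc \<rho> w where
  gen: "w \<in> gsub sc \<rho> w"
| act: "u \<in> gsub sc \<rho> w \<Longrightarrow> x \<in> curalg \<Longrightarrow> \<rho> x u \<in> gsub sc \<rho> w"
| add: "u \<in> gsub sc \<rho> w \<Longrightarrow> v \<in> gsub sc \<rho> w \<Longrightarrow> u + v \<in> gsub sc \<rho> w"
| smult: "u \<in> gsub sc \<rho> w \<Longrightarrow> sc c u \<in> gsub sc \<rho> w"

text \<open>Integrable as sl_n-module: all e_alpha, f_alpha (i.e. all E_ij tensor 1,
 i /= j) act locally nilpotently.\<close>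
definition sl_integrable :: "('n::finite cur \<Rightarrow> 'v::zero \<Rightarrow> 'v) \<Rightarrow> 'v set \<Rightarrow> bool" where
  "sl_integrable \<rho> S \<longleftrightarrow>
     (\<forall>i j. i \<noteq> j \<longrightarrow> (\<forall>u\<in>S. \<exists>m. (\<rho> (mono (Emat i j) 0) ^^ m) u = 0))"

definition F_rel :: "(complex \<Rightarrow> 'v::ab_group_add \<Rightarrow> 'v) \<Rightarrow> ('n::{finite,linorder} cur \<Rightarrow> 'v \<Rightarrow> 'v)
    \<Rightarrow> ('n \<Rightarrow> int) \<Rightarrow> ('n \<Rightarrow> int) \<Rightarrow> 'v \<Rightarrow> bool" where
  "F_rel sc \<rho> lam1 lam2 w \<longleftrightarrow>
     (\<forall>x\<in>b_tpos. \<rho> x w = 0) \<and>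
     (\<forall>x\<in>nplus_1. \<rho> x w = 0) \<and>
     (\<forall>H\<in>cartan. \<rho> (mono H 0) w = sc (wt (\<lambda>i. lam1 i + lam2 i) H) w) \<and>
     (\<forall>x\<in>nminus_t2. \<rho> x w = 0) \<and>
     (\<forall>i j. i < j \<longrightarrow>
        (\<rho> (mono (Emat j i) 1) ^^ (min (hval lam1 i j) (hval lam2 i j) + 1)) w = 0)"

definition W_rel :: "(complex \<Rightarrow> 'v::ab_group_add \<Rightarrow> 'v) \<Rightarrow> ('n::{finite,linorder} cur \<Rightarrow> 'v \<Rightarrow> 'v)
    \<Rightarrow> ('n \<Rightarrow> int) \<Rightarrow> ('n \<Rightarrow> int) \<Rightarrow> 'v \<Rightarrow> bool" where
  "W_rel sc \<rho> lam1 lam2 w \<longleftrightarrow>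
     (\<forall>x\<in>nplus_cur. \<rho> x w = 0) \<and>
     (\<forall>x\<in>h_tpos. \<rho> x w = 0) \<and>
     (\<forall>x\<in>nminus_t2. \<rho> x w = 0) \<and>
     (\<forall>i j. i < j \<longrightarrow>
        (\<rho> (mono (Emat j i) 0) ^^ (hval (\<lambda>k. lam1 k + lam2 k) i j + 1)) w = 0) \<and>
     (\<forall>i j. i < j \<longrightarrow>
        (\<rho> (mono (Emat j i) 1) ^^ (min (hval lam1 i j) (hval lam2 i j) + 1)) w = 0) \<and>
     (\<forall>H\<in>cartan. \<rho> (mono H 0) w = sc (wt (\<lambda>i. lam1 i + lam2 i) H) w)"

end

theory Submission imports Defs
begin

lemma Emat_mul: "Emat a b ** Emat c d = (if b = c then Emat a d else 0)"
proof -
  have "(Emat a b ** Emat c d) $ x $ y = (if b = c then Emat a d else 0) $ x $ y" for x y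
  proof -
    have "(Emat a b ** Emat c d) $ x $ y = (\<Sum>k\<in>UNIV. (if x = a \<and> k = b then 1 else 0) * (if k = c \<and> y = d then 1 else 0))"
      by (simp add: matrix_matrix_mult_def Emat_def)
    also have "\<dots> = (\<Sum>k\<in>UNIV. if k = b then (if x = a \<and> b = c \<and> y = d then 1 else 0) else 0)"
      by (rule sum.cong) auto
    also have "\<dots> = (if b = c then Emat a d else 0) $ x $ y"
      by (simp add: Emat_def)
    finally show ?thesis .
  qed
  then show ?thesis by (simp add: vec_eq_iff)
qed

lemma trace_Emat: "trace (Emat i j) = (if i = j then 1 else 0)"
  by (cases "i = j") (auto simp: trace_def Emat_def intro!: sum.neutral)

lemma mat_sub_ldistrib: "(A::complex^'n::finite^'n) ** (B - C) = A ** B - A ** C"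
  by (simp add: matrix_matrix_mult_def vec_eq_iff sum_subtractf algebra_simps)

lemma mat_sub_rdistrib: "((A::complex^'n::finite^'n) - B) ** C = A ** C - B ** C"
  by (simp add: matrix_matrix_mult_def vec_eq_iff sum_subtractf algebra_simps)

lemma zero_curalg: "((\<lambda>_. 0)::'n::finite cur) \<in> curalg"
  by (simp add: curalg_def trace_def)

lemma mono_curalg: "trace A = 0 \<Longrightarrow> mono A 0 \<in> curalg"
proof -
  assume "trace A = 0"
  moreover have "{k. mono A 0 k \<noteq> 0} \<subseteq> {0}" by (auto simp: mono_def)
  ultimately show ?thesis by (auto simp: curalg_def mono_def trace_def intro: finite_subset)
qed

lemma cbr_mono0: "cbr (mono A 0) y = (\<lambda>k. A ** y k - y k ** A)"
proof
  fix k
  have "cbr (mono A 0) y k = (\<Sum>p\<le>k. if p = 0 then A ** y (k - p) - y (k - p) ** A else 0)"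
    unfolding cbr_def by (rule sum.cong) (auto simp: mono_def)
  also have "\<dots> = A ** y k - y k ** A" by simp
  finally show "cbr (mono A 0) y k = A ** y k - y k ** A" .
qed

lemma cbr_mono00: "cbr (mono A 0) (mono B 0) = mono (A ** B - B ** A) 0"
  unfolding cbr_mono0 by (auto simp: mono_def)

lemma cscale_mono: "cscale c (mono X k) = mono (smat c X) k"
  by (auto simp: cscale_def mono_def smat_def vec_eq_iff)

lemma cbr_curalg: assumes "y \<in> curalg" shows "cbr (mono A 0) y \<in> curalg"
proof -
  have "{k. cbr (mono A 0) y k \<noteq> 0} \<subseteq> {k. y k \<noteq> 0}" by (auto simp: cbr_mono0)
  moreover have "trace (A ** y k - y k ** A) = 0" for k
    by (simp only: trace_sub trace_mul_sym[of A "y k"]) simp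
  ultimately show ?thesis using assms by (auto simp: curalg_def cbr_mono0 intro: finite_subset)
qed

lemma Emat_curalg: "i \<noteq> j \<Longrightarrow> mono (Emat i j) 0 \<in> curalg"
  by (rule mono_curalg) (simp add: trace_Emat)

lemma H_curalg: "mono (Emat i i - Emat j j) 0 \<in> curalg"
  by (rule mono_curalg) (simp add: trace_Emat trace_sub)

inductive_set addcl :: "'a::monoid_add set \<Rightarrow> 'a set" for G where
  zero: "0 \<in> addcl G"
| gen: "g \<in> G \<Longrightarrow> g \<in> addcl G"
| plus: "a \<in> addcl G \<Longrightarrow> b \<in> addcl G \<Longrightarrow> a + b \<in> addcl G"

context
  fixes sc :: "complex \<Rightarrow> 'v::ab_group_add \<Rightarrow> 'v" and \<rho> :: "'n::finite cur \<Rightarrow> 'v \<Rightarrow> 'v"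
  assumes rep: "is_rep sc \<rho>"
begin

lemma vs: "vector_space sc" using rep by (simp add: is_rep_def)
lemma vm: "module sc" using vs by (simp add: module_iff_vector_space)

lemma r_add: "x \<in> curalg \<Longrightarrow> \<rho> x (u + v) = \<rho> x u + \<rho> x v"
  using rep by (simp add: is_rep_def)
lemma r_sc: "x \<in> curalg \<Longrightarrow> \<rho> x (sc c u) = sc c (\<rho> x u)"
  using rep by (simp add: is_rep_def)
lemma r_cadd: "x \<in> curalg \<Longrightarrow> y \<in> curalg \<Longrightarrow> \<rho> (cadd x y) u = \<rho> x u + \<rho> y u"
  using rep by (simp add: is_rep_def)
lemma r_cscale: "x \<in> curalg \<Longrightarrow> \<rho> (cscale c x) u = sc c (\<rho> x u)"
  using rep by (simp add: is_rep_def)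
lemma r_br: "x \<in> curalg \<Longrightarrow> y \<in> curalg \<Longrightarrow> \<rho> (cbr x y) u = \<rho> x (\<rho> y u) - \<rho> y (\<rho> x u)"
  using rep by (simp add: is_rep_def)

lemma r_zero_v: "x \<in> curalg \<Longrightarrow> \<rho> x 0 = 0"
  using r_add[of x 0 0] by simp

lemma r_zero_x: "\<rho> (\<lambda>_. 0) u = 0"
proof -
  have "cadd (\<lambda>_. 0) (\<lambda>_. 0) = ((\<lambda>_. 0)::'n cur)" by (simp add: cadd_def fun_eq_iff)
  then show ?thesis using r_cadd[OF zero_curalg zero_curalg, of u] by simp
qed

lemma pow_zero: "x \<in> curalg \<Longrightarrow> (\<rho> x ^^ m) 0 = 0"
  by (induction m) (auto simp: r_zero_v)

lemma pow_add: "x \<in> curalg \<Longrightarrow> (\<rho> x ^^ m) (u + v) = (\<rho> x ^^ m) u + (\<rho> x ^^ m) v"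
  by (induction m) (auto simp: r_add)

lemma pow_sc: "x \<in> curalg \<Longrightarrow> (\<rho> x ^^ m) (sc c u) = sc c ((\<rho> x ^^ m) u)"
  by (induction m) (auto simp: r_sc)

lemma sc_zero: "sc c 0 = 0"
  by (rule module.scale_zero_right[OF vm])

lemma sl2_bound:
  fixes i j :: 'n and M :: nat
  assumes ij: "i \<noteq> j"
    and hw: "\<rho> (mono (Emat i j) 0) w = 0"
    and wt: "\<rho> (mono (Emat i i - Emat j j) 0) w = sc (of_nat M) w"
    and nil: "\<exists>N. (\<rho> (mono (Emat j i) 0) ^^ N) w = 0"
  shows "(\<rho> (mono (Emat j i) 0) ^^ (M + 1)) w = 0"
proof -
  define E where "E = mono (Emat i j) 0"
  define F where "F = mono (Emat j i) 0"
  define H where "H = mono (Emat i i - Emat j j) 0"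
  have E: "E \<in> curalg" and F: "F \<in> curalg" and H: "H \<in> curalg"
    using ij by (auto simp: E_def F_def H_def Emat_curalg H_curalg)
  have cEF: "cbr E F = H"
    using ij by (simp add: E_def F_def H_def cbr_mono00 Emat_mul)
  have "(Emat i i - Emat j j) ** Emat j i - Emat j i ** (Emat i i - Emat j j) = smat (-2) (Emat j i)"
    using ij by (simp add: mat_sub_ldistrib mat_sub_rdistrib Emat_mul smat_def vec_eq_iff)
  then have cHF: "cbr H F = cscale (-2) F"
    by (simp add: H_def F_def cbr_mono00 cscale_mono)
  have EF: "\<rho> E (\<rho> F v) = \<rho> F (\<rho> E v) + \<rho> H v" for v
    using r_br[OF E F, of v] cEF by simp
  have HF: "\<rho> H (\<rho> F v) = \<rho> F (\<rho> H v) + sc (-2) (\<rho> F v)" for v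
    using r_br[OF H F, of v] cHF r_cscale[OF F, of "-2" v] by simp
  define f where "f k = (\<rho> F ^^ k) w" for k
  have fS: "f (Suc k) = \<rho> F (f k)" for k by (simp add: f_def)
  define m where "m = (of_nat M :: complex)"
  have c1: "\<rho> H (f k) = sc (m - 2 * of_nat k) (f k)" for k
  proof (induction k)
    case 0 then show ?case using wt by (simp add: f_def H_def m_def)
  next
    case (Suc k)
    have "\<rho> H (f (Suc k)) = \<rho> F (sc (m - 2 * of_nat k) (f k)) + sc (-2) (f (Suc k))"
      by (simp add: fS HF Suc)
    also have "\<dots> = sc (m - 2 * of_nat k) (f (Suc k)) + sc (-2) (f (Suc k))"
      by (simp add: r_sc[OF F] fS)
    also have "\<dots> = sc (m - 2 * of_nat (Suc k)) (f (Suc k))"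
      by (simp add: module.scale_left_distrib[OF vm, symmetric] algebra_simps)
    finally show ?case .
  qed
  have c2: "\<rho> E (f (Suc k)) = sc ((of_nat k + 1) * (m - of_nat k)) (f k)" for k
  proof (induction k)
    case 0
    have hwE: "\<rho> E w = 0" and wtH: "\<rho> H w = sc m w" using hw wt by (simp_all add: E_def H_def m_def)
    show ?case by (simp add: f_def EF hwE wtH r_zero_v[OF F])
  next
    case (Suc k)
    have "\<rho> E (f (Suc (Suc k))) = \<rho> F (sc ((of_nat k + 1) * (m - of_nat k)) (f k)) + sc (m - 2 * of_nat (Suc k)) (f (Suc k))"
      by (simp only: fS[of "Suc k"] EF Suc c1)
    also have "\<dots> = sc ((of_nat k + 1) * (m - of_nat k)) (f (Suc k)) + sc (m - 2 * of_nat (Suc k)) (f (Suc k))"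
      by (simp add: r_sc[OF F] fS)
    also have "\<dots> = sc ((of_nat (Suc k) + 1) * (m - of_nat (Suc k))) (f (Suc k))"
      by (simp add: module.scale_left_distrib[OF vm, symmetric] algebra_simps)
    finally show ?case .
  qed
  obtain N where N: "f N = 0" and Nmin: "\<And>n. n < N \<Longrightarrow> f n \<noteq> 0"
    using nil exists_least_iff[of "\<lambda>N. f N = 0"] unfolding f_def F_def by metis
  show ?thesis
  proof (cases N)
    case 0
    then have "w = 0" using N by (simp add: f_def)
    then show ?thesis using pow_zero[OF F, of "M+1"] by (simp only: F_def)
  next
    case (Suc K)
    have "sc ((of_nat K + 1) * (m - of_nat K)) (f K) = 0"
      using c2[of K] N Suc r_zero_v[OF E] by simp
    moreover have "f K \<noteq> 0" using Nmin Suc by simp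
    ultimately have "(of_nat K + 1) * (m - of_nat K) = 0"
      using vector_space.scale_eq_0_iff[OF vs] by blast
    moreover have "(of_nat K + 1::complex) \<noteq> 0"
      by (metis of_nat_Suc of_nat_eq_0_iff nat.distinct(1) add.commute)
    ultimately have "m = of_nat K" by simp
    then have "K = M" by (simp add: m_def)
    then show ?thesis using N Suc by (simp add: f_def F_def)
  qed
qed


lemma nil_act:
  fixes A :: "complex^'n^'n"
  assumes tr: "trace A = 0" and AA: "A ** A = 0" and y: "y \<in> curalg"
    and u: "(\<rho> (mono A 0) ^^ m) u = 0"
  shows "(\<rho> (mono A 0) ^^ (m + 2)) (\<rho> y u) = 0"
proof -
  define X where "X = mono A 0"
  have X: "X \<in> curalg" using tr by (simp add: X_def mono_curalg)
  define adm where "adm Y = A ** Y - Y ** A" for Y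
  have AA': "Z ** A ** A = 0" for Z
    by (metis AA matrix_mul_assoc times0_right)
  have adm3: "adm (adm (adm Y)) = 0" for Y
    unfolding adm_def
    apply (simp only: mat_sub_ldistrib mat_sub_rdistrib matrix_mul_assoc)
    apply (simp only: AA AA' times0_left times0_right)
    by simp
  have adm0: "adm 0 = 0" by (simp add: adm_def)
  have admk: "(adm ^^ k) Y = 0" if "k \<ge> 3" for k Y
  proof -
    define d where "d = k - 3"
    have "k = d + 3" using that by (simp add: d_def)
    then have "(adm ^^ k) Y = (adm ^^ d) (adm (adm (adm Y)))"
      by (simp only: funpow_add) (simp add: numeral_3_eq_3)
    also have "\<dots> = 0" using adm3 by (induction d) (simp_all add: adm0)
    finally show ?thesis .
  qed
  define Yk where "Yk k = (cbr X ^^ k) y" for k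
  have Ykc: "Yk k \<in> curalg" for k
    by (induction k) (simp_all add: Yk_def y X_def cbr_curalg)
  have Yk_eq: "Yk k = (\<lambda>q. (adm ^^ k) (y q))" for k
    by (induction k) (simp_all add: Yk_def X_def cbr_mono0 adm_def)
  have Yk0: "Yk k = (\<lambda>_. 0)" if "k \<ge> 3" for k
    using admk[OF that] by (simp add: Yk_eq)
  have YkS: "Yk (Suc k) = cbr X (Yk k)" for k by (simp add: Yk_def)
  define G where "G n = {\<rho> (Yk k) ((\<rho> X ^^ l) u) | k l. k + l = n}" for n
  have step: "v \<in> addcl (G n) \<Longrightarrow> \<rho> X v \<in> addcl (G (Suc n))" for v n
  proof (induction rule: addcl.induct)
    case zero then show ?case by (simp add: r_zero_v[OF X] addcl.zero)
  next
    case (gen g)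
    then obtain k l where g: "g = \<rho> (Yk k) ((\<rho> X ^^ l) u)" and kl: "k + l = n"
      by (auto simp: G_def)
    have "\<rho> X g = \<rho> (Yk k) (\<rho> X ((\<rho> X ^^ l) u)) + \<rho> (Yk (Suc k)) ((\<rho> X ^^ l) u)"
      using r_br[OF X Ykc[of k], of "(\<rho> X ^^ l) u"] by (simp add: g YkS)
    also have "\<dots> = \<rho> (Yk k) ((\<rho> X ^^ Suc l) u) + \<rho> (Yk (Suc k)) ((\<rho> X ^^ l) u)" by simp
    also have "\<dots> \<in> addcl (G (Suc n))"
    proof -
      have kl1: "k + Suc l = Suc n" and kl2: "Suc k + l = Suc n" using kl by simp_all
      have g1: "\<rho> (Yk k) ((\<rho> X ^^ Suc l) u) \<in> G (Suc n)"
        unfolding G_def using kl1 by blast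
      have g2: "\<rho> (Yk (Suc k)) ((\<rho> X ^^ l) u) \<in> G (Suc n)"
        unfolding G_def using kl2 by blast
      show ?thesis by (intro addcl.plus addcl.gen g1 g2)
    qed
    finally show ?case .
  next
    case (plus a b) then show ?case by (simp add: r_add[OF X] addcl.plus)
  qed
  have main: "(\<rho> X ^^ n) (\<rho> y u) \<in> addcl (G n)" for n
  proof (induction n)
    case 0
    have "\<rho> y u \<in> G 0" by (simp add: G_def Yk_def) 
    then show ?case by (simp add: addcl.gen)
  next
    case (Suc n) then show ?case using step by simp
  qed
  have G0: "G (m + 2) \<subseteq> {0}"
  proof
    fix g assume "g \<in> G (m + 2)"
    then obtain k l where g: "g = \<rho> (Yk k) ((\<rho> X ^^ l) u)" and kl: "k + l = m + 2"
      by (auto simp: G_def)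
    show "g \<in> {0}"
    proof (cases "k \<ge> 3")
      case True then show ?thesis by (simp add: g Yk0 r_zero_x)
    next
      case False
      define d where "d = l - m"
      have "l = d + m" using kl False by (simp add: d_def)
      then have "(\<rho> X ^^ l) u = 0" using u pow_zero[OF X, of d] by (simp add: funpow_add X_def)
      then show ?thesis by (simp add: g r_zero_v[OF Ykc])
    qed
  qed
  have "\<forall>v\<in>addcl (G (m+2)). v = 0"
  proof
    fix v assume "v \<in> addcl (G (m+2))"
    then show "v = 0" by induction (use G0 in auto)
  qed
  then show ?thesis using main[of "m+2"] by (simp add: X_def)
qed

end

lemma integrable:
  fixes lam1 lam2 :: "'m::{finite,linorder} \<Rightarrow> int" and \<rho>' :: "'m cur \<Rightarrow> 'v::ab_group_add \<Rightarrow> 'v" and sc :: "complex \<Rightarrow> 'v \<Rightarrow> 'v"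
  assumes rep': "is_rep sc \<rho>'" and W: "W_rel sc \<rho>' lam1 lam2 w"
  shows "sl_integrable \<rho>' (gsub sc \<rho>' w)"
  unfolding sl_integrable_def
proof (intro allI impI ballI)
  fix i j :: 'm and u assume ij: "i \<noteq> j" and u: "u \<in> gsub sc \<rho>' w"
  define X where "X = mono (Emat i j) 0"
  have X: "X \<in> curalg" using ij by (simp add: X_def Emat_curalg)
  from u show "\<exists>m. (\<rho>' (mono (Emat i j) 0) ^^ m) u = 0"
  proof induction
    case gen
    show ?case
    proof (cases "i < j")
      case True
      have "mono (Emat i j) 0 \<in> nplus_cur"
        using True Emat_curalg[OF ij] unfolding nplus_cur_def by (auto simp: mono_def Emat_def)
      then have "\<rho>' (mono (Emat i j) 0) w = 0" using W by (simp add: W_rel_def)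
      then show ?thesis by (intro exI[of _ 1]) simp
    next
      case False
      then have "j < i" using ij by simp
      then show ?thesis using W unfolding W_rel_def by blast
    qed
  next
    case (act v y)
    then obtain m where "(\<rho>' (mono (Emat i j) 0) ^^ m) v = 0" by blast
    then have "(\<rho>' (mono (Emat i j) 0) ^^ (m + 2)) (\<rho>' y v) = 0"
      using nil_act[OF rep', of "Emat i j" y m v] ij act by (simp add: trace_Emat Emat_mul)
    then show ?case by blast
  next
    case (add a b)
    then obtain m1 m2 where m1: "(\<rho>' X ^^ m1) a = 0" and m2: "(\<rho>' X ^^ m2) b = 0"
      by (auto simp: X_def)
    have ea: "(\<rho>' X ^^ (m2 + m1)) a = 0"
      by (simp add: funpow_add m1 pow_zero[OF rep' X])
    have eb: "(\<rho>' X ^^ (m2 + m1)) b = (\<rho>' X ^^ m1) ((\<rho>' X ^^ m2) b)"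
      by (subst add.commute) (simp add: funpow_add)
    have "(\<rho>' X ^^ (m2 + m1)) (a + b) = 0"
      by (simp add: pow_add[OF rep' X] ea eb m2 pow_zero[OF rep' X])
    then show ?case by (auto simp: X_def)
  next
    case (smult a c)
    then obtain m where "(\<rho>' X ^^ m) a = 0" by (auto simp: X_def)
    then have "(\<rho>' X ^^ m) (sc c a) = 0" by (simp add: pow_sc[OF rep' X] sc_zero[OF rep'])
    then show ?case by (auto simp: X_def)
  qed
qed



lemma b_split:
  fixes x :: "'n::{finite,linorder} cur"
  assumes x: "x \<in> b_tpos"
  shows "\<exists>U D. U \<in> nplus_cur \<and> D \<in> h_tpos \<and> x = cadd U D"
proof -
  define U where "U = (\<lambda>k. (\<chi> a b. if a < b then x k $ a $ b else 0))"
  define D where "D = (\<lambda>k. (\<chi> a b. if a = b then x k $ a $ b else 0))"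
  have fx: "finite {k. x k \<noteq> 0}" and tx: "\<And>k. trace (x k) = 0" and x0: "x 0 = 0"
    and low: "\<And>k a b. b < a \<Longrightarrow> x k $ a $ b = 0"
    using x by (auto simp: b_tpos_def curalg_def)
  have sU: "{k. U k \<noteq> 0} \<subseteq> {k. x k \<noteq> 0}" by (auto simp: U_def vec_eq_iff)
  have sD: "{k. D k \<noteq> 0} \<subseteq> {k. x k \<noteq> 0}" by (auto simp: D_def vec_eq_iff)
  have "U \<in> nplus_cur"
    using finite_subset[OF sU fx] by (auto simp: nplus_cur_def curalg_def U_def trace_def)
  moreover have "D \<in> h_tpos"
    using finite_subset[OF sD fx] tx x0 by (auto simp: h_tpos_def curalg_def D_def trace_def vec_eq_iff)
  moreover have "x = cadd U D"
    using low by (auto simp: cadd_def U_def D_def vec_eq_iff fun_eq_iff)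
  ultimately show ?thesis by blast
qed

lemma n_split:
  fixes x :: "'n::{finite,linorder} cur"
  assumes x: "x \<in> nplus_cur"
  shows "\<exists>P Q. P \<in> nplus_1 \<and> Q \<in> b_tpos \<and> x = cadd P Q"
proof -
  define P where "P = (\<lambda>k. if k = 0 then x k else 0)"
  define Q where "Q = (\<lambda>k. if k = 0 then 0 else x k)"
  have fx: "finite {k. x k \<noteq> 0}" and tx: "\<And>k. trace (x k) = 0"
    and low: "\<And>k a b. b \<le> a \<Longrightarrow> x k $ a $ b = 0"
    using x by (auto simp: nplus_cur_def curalg_def)
  have sP: "{k. P k \<noteq> 0} \<subseteq> {k. x k \<noteq> 0}" by (auto simp: P_def)
  have sQ: "{k. Q k \<noteq> 0} \<subseteq> {k. x k \<noteq> 0}" by (auto simp: Q_def)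
  note tr0 = trace_0[unfolded mat_0]
  have "P \<in> nplus_1"
    using finite_subset[OF sP fx] tx low tr0 by (auto simp: nplus_1_def nplus_cur_def curalg_def P_def)
  moreover have "Q \<in> b_tpos"
    using finite_subset[OF sQ fx] tx low tr0 by (auto simp: b_tpos_def curalg_def Q_def)
  moreover have "x = cadd P Q"
    by (auto simp: cadd_def P_def Q_def fun_eq_iff)
  ultimately show ?thesis by blast
qed

lemma H_cartan: "i \<noteq> j \<Longrightarrow> Emat i i - Emat j j \<in> cartan"
  by (simp add: cartan_def trace_sub trace_Emat) (simp add: Emat_def)

lemma wt_H: "i \<noteq> j \<Longrightarrow> wt L (Emat i i - Emat j j) = of_int (L i) - of_int (L j)"
proof -
  assume ij: "i \<noteq> j"
  have "wt L (Emat i i - Emat j j) = (\<Sum>k\<in>UNIV. (if k = i then of_int (L k) else 0) - (if k = j then of_int (L k) else 0))"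
    unfolding wt_def by (rule sum.cong) (auto simp: Emat_def)
  also have "\<dots> = of_int (L i) - of_int (L j)" by (simp add: sum_subtractf)
  finally show ?thesis .
qed

theorem proposition3p1:
  fixes lam1 lam2 :: "'n::{finite,linorder} \<Rightarrow> int"
    and sc :: "complex \<Rightarrow> 'v::ab_group_add \<Rightarrow> 'v"
    and \<rho> :: "'n cur \<Rightarrow> 'v \<Rightarrow> 'v"
    and w :: 'v
  assumes "dominant lam1" and "dominant lam2" and "is_rep sc \<rho>"
  shows "W_rel sc \<rho> lam1 lam2 w \<longleftrightarrow>
           (F_rel sc \<rho> lam1 lam2 w \<and> sl_integrable \<rho> (gsub sc \<rho> w))"
proof
  assume W: "W_rel sc \<rho> lam1 lam2 w"
  have "\<forall>x\<in>b_tpos. \<rho> x w = 0"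
  proof
    fix x :: "'n cur" assume "x \<in> b_tpos"
    then obtain U D where U: "U \<in> nplus_cur" and D: "D \<in> h_tpos" and x: "x = cadd U D"
      using b_split by blast
    have "U \<in> curalg" "D \<in> curalg" using U D by (auto simp: nplus_cur_def h_tpos_def)
    then show "\<rho> x w = 0" using W U D by (simp add: x r_cadd[OF assms(3)] W_rel_def)
  qed
  moreover have "\<forall>x\<in>nplus_1. \<rho> x w = 0" using W by (auto simp: W_rel_def nplus_1_def)
  ultimately show "F_rel sc \<rho> lam1 lam2 w \<and> sl_integrable \<rho> (gsub sc \<rho> w)"
    using W integrable[OF assms(3) W] by (simp add: F_rel_def W_rel_def)
next
  assume FI: "F_rel sc \<rho> lam1 lam2 w \<and> sl_integrable \<rho> (gsub sc \<rho> w)"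
  then have F: "F_rel sc \<rho> lam1 lam2 w" and I: "sl_integrable \<rho> (gsub sc \<rho> w)" by auto
  have nc: "\<forall>x\<in>nplus_cur. \<rho> x w = 0"
  proof
    fix x :: "'n cur" assume "x \<in> nplus_cur"
    then obtain P Q where P: "P \<in> nplus_1" and Q: "Q \<in> b_tpos" and x: "x = cadd P Q"
      using n_split by blast
    have "P \<in> curalg" "Q \<in> curalg" using P Q by (auto simp: nplus_1_def nplus_cur_def b_tpos_def)
    then show "\<rho> x w = 0" using F P Q by (simp add: x r_cadd[OF assms(3)] F_rel_def)
  qed
  have ht: "\<forall>x\<in>h_tpos. \<rho> x w = 0"
    using F by (auto simp: F_rel_def h_tpos_def b_tpos_def)
  have fr: "(\<rho> (mono (Emat j i) 0) ^^ (hval (\<lambda>k. lam1 k + lam2 k) i j + 1)) w = 0"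
    if ij: "i < j" for i j
  proof (rule sl2_bound[OF assms(3)])
    show "i \<noteq> j" using ij by simp
    have "mono (Emat i j) 0 \<in> nplus_cur"
      using ij Emat_curalg[of i j] unfolding nplus_cur_def by (auto simp: mono_def Emat_def)
    then show "\<rho> (mono (Emat i j) 0) w = 0" using nc by blast
    have "lam1 j \<le> lam1 i" "lam2 j \<le> lam2 i" using assms(1,2) ij by (auto simp: dominant_def)
    then have "wt (\<lambda>k. lam1 k + lam2 k) (Emat i i - Emat j j)
        = of_nat (hval (\<lambda>k. lam1 k + lam2 k) i j)"
      using ij by (simp add: wt_H hval_def)
    then show "\<rho> (mono (Emat i i - Emat j j) 0) w = sc (of_nat (hval (\<lambda>k. lam1 k + lam2 k) i j)) w"
      using F H_cartan[of i j] ij by (auto simp: F_rel_def)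
    show "\<exists>N. (\<rho> (mono (Emat j i) 0) ^^ N) w = 0"
      using I ij gsub.gen[of w sc \<rho>] unfolding sl_integrable_def by auto
  qed
  show "W_rel sc \<rho> lam1 lam2 w"
    using F nc ht fr by (simp add: F_rel_def W_rel_def)
qed

end
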